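(* Fix a deck $\beta_1,\ldots,\beta_B\in\mathscr{B}$ and let $\mathcal{B}=\{1,\ldots,B\}$. Consider the binary linear program: minimize $\sum_{i,j\in\mathcal{N}, i\neq j}x_{i,j}$ over $x\in\{0,1\}^{\mathcal{N}\times\mathcal{N}}$ subject to (1) $\sum_{j\in\mathcal{N}}x_{i,j}=1$ for all $i\in\mathcal{N}$; (2) $\sum_{i\in\mathcal{N}}x_{i,j}=1$ for all $j\in\mathcal{N}$; (3) $\sum_{i\in\mathcal{N}}x_{i,i}\le|\mathcal{N}|-2$; (4) $\sum_{i\in\mathcal{N}_c}\sum_{j\in\beta_b}x_{i,j}\le v_c$ for all $b\in\mathcal{B}$, $c\in\mathcal{C}$; (5) $x_{i,j}=0$ for all $i,j\in\mathcal{N}$ with $|\{b\in\mathcal{B}: i\in\beta_b\}|\neq|\{b\in\mathcal{B}: j\in\beta_b\}|$. Let $x$ be an optimal solution and let $\sigma:\mathcal{N}\to\mathcal{N}$ be defined by $\sigma(i)=j$ iff $x_{i,j}=1$. Then $\sigma\in\Sigma$, $T^\sigma(\beta_1,\ldots,\beta_B)=T^*(\beta_1,\ldots,\beta_B)$, and $\sigma$ is minimal, i.e. the graph $\mathscr{G}^\sigma$ has exactly one connected component.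
   Context: A ballot style consists of contests $\mathcal{C}=\{1,\ldots,C\}$, candidates $\mathcal{N}=\{1,\ldots,N\}$ partitioned into nonempty sets $\mathcal{N}_c$ ($c\in\mathcal{C}$), and positive integers $v_c$. A filled-out ballot is a subset $\beta\subseteq\mathcal{N}$; $\mathscr{B}=\{\beta\subseteq\mathcal{N}: |\mathcal{N}_c\cap\beta|\le v_c\ \forall c\}$. For $i\in\mathcal{N}_c$: $T^*_i(\beta_1,\ldots,\beta_B)=\sum_{b=1}^B\mathbb{I}\{i\in\beta_b\text{ and }|\mathcal{N}_c\cap\beta_b|\le v_c\}$, and for a bijection $\sigma$ of $\mathcal{N}$, $T^\sigma_i(\beta_1,\ldots,\beta_B)=\sum_{b=1}^B\mathbb{I}\{\sigma(i)\in\beta_b\text{ and }|\{\sigma(j)\in\beta_b: j\in\mathcal{N}_c\}|\le v_c\}$. $\Sigma$ is the set of non-identity bijections $\mathcal{N}\to\mathcal{N}$. For $\sigma\in\Sigma$, $\mathscr{G}^\sigma=(\mathscr{V}^\sigma,\mathscr{E}^\sigma)$ is the undirected graph with vertex set $\mathscr{V}^\sigma=\{c\in\mathcal{C}:\exists i\in\mathcal{N}_c,\ \sigma(i)\neq i\}$ and edge set $\mathscr{E}^\sigma=\{(c,c'): \exists i\in\mathcal{N}_c, i'\in\mathcal{N}_{c'}\text{ with }\sigma(i)=i'\text{ or }\sigma(i')=i\}$. *)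

theory Defs
  imports Main
begin

(* Candidates are 1..N, contests are 1..C; cand c is the candidate set N_c,
   v c the vote limit of contest c, beta b the b-th ballot (b = 1..B). *)

definition is_ballot_style :: "nat \<Rightarrow> nat \<Rightarrow> (nat \<Rightarrow> nat set) \<Rightarrow> (nat \<Rightarrow> nat) \<Rightarrow> bool" where
  "is_ballot_style N C cand v \<longleftrightarrow>
     (\<forall>c\<in>{1..C}. cand c \<noteq> {}) \<and>
     (\<forall>c\<in>{1..C}. \<forall>c'\<in>{1..C}. c \<noteq> c' \<longrightarrow> cand c \<inter> cand c' = {}) \<and>
     (\<Union>c\<in>{1..C}. cand c) = {1..N} \<and>
     (\<forall>c\<in>{1..C}. v c > 0)"

definition valid_ballots :: "nat \<Rightarrow> nat \<Rightarrow> (nat \<Rightarrow> nat set) \<Rightarrow> (nat \<Rightarrow> nat) \<Rightarrow> nat set set" where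
  "valid_ballots N C cand v = {\<beta>. \<beta> \<subseteq> {1..N} \<and> (\<forall>c\<in>{1..C}. card (cand c \<inter> \<beta>) \<le> v c)}"

definition Tstar :: "(nat \<Rightarrow> nat set) \<Rightarrow> (nat \<Rightarrow> nat) \<Rightarrow> nat \<Rightarrow> (nat \<Rightarrow> nat set) \<Rightarrow> nat \<Rightarrow> nat \<Rightarrow> nat" where
  "Tstar cand v B beta c i =
     card {b\<in>{1..B}. i \<in> beta b \<and> card (cand c \<inter> beta b) \<le> v c}"

definition Tsigma :: "(nat \<Rightarrow> nat) \<Rightarrow> (nat \<Rightarrow> nat set) \<Rightarrow> (nat \<Rightarrow> nat) \<Rightarrow> nat \<Rightarrow> (nat \<Rightarrow> nat set) \<Rightarrow> nat \<Rightarrow> nat \<Rightarrow> nat" where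
  "Tsigma \<sigma> cand v B beta c i =
     card {b\<in>{1..B}. \<sigma> i \<in> beta b \<and> card {\<sigma> j |j. j \<in> cand c \<and> \<sigma> j \<in> beta b} \<le> v c}"

definition Sigma_set :: "nat \<Rightarrow> (nat \<Rightarrow> nat) set" where
  "Sigma_set N = {\<sigma>. bij_betw \<sigma> {1..N} {1..N} \<and> (\<exists>i\<in>{1..N}. \<sigma> i \<noteq> i)}"

definition graph_V :: "(nat \<Rightarrow> nat) \<Rightarrow> nat \<Rightarrow> (nat \<Rightarrow> nat set) \<Rightarrow> nat set" where
  "graph_V \<sigma> C cand = {c\<in>{1..C}. \<exists>i\<in>cand c. \<sigma> i \<noteq> i}"

definition graph_E :: "(nat \<Rightarrow> nat) \<Rightarrow> nat \<Rightarrow> (nat \<Rightarrow> nat set) \<Rightarrow> (nat \<times> nat) set" where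
  "graph_E \<sigma> C cand = {(c, c'). c \<in> {1..C} \<and> c' \<in> {1..C} \<and>
      (\<exists>i\<in>cand c. \<exists>i'\<in>cand c'. \<sigma> i = i' \<or> \<sigma> i' = i)}"

definition one_component :: "'a set \<Rightarrow> ('a \<times> 'a) set \<Rightarrow> bool" where
  "one_component V E \<longleftrightarrow> V \<noteq> {} \<and>
     (\<forall>a\<in>V. \<forall>b\<in>V. (a, b) \<in> (Restr (E \<union> E\<inverse>) V)\<^sup>*)"

definition feasible :: "nat \<Rightarrow> nat \<Rightarrow> (nat \<Rightarrow> nat set) \<Rightarrow> (nat \<Rightarrow> nat) \<Rightarrow> nat \<Rightarrow> (nat \<Rightarrow> nat set)
    \<Rightarrow> (nat \<Rightarrow> nat \<Rightarrow> int) \<Rightarrow> bool" where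
  "feasible N C cand v B beta x \<longleftrightarrow>
     (\<forall>i\<in>{1..N}. \<forall>j\<in>{1..N}. x i j \<in> {0, 1}) \<and>
     (\<forall>i\<in>{1..N}. (\<Sum>j\<in>{1..N}. x i j) = 1) \<and>
     (\<forall>j\<in>{1..N}. (\<Sum>i\<in>{1..N}. x i j) = 1) \<and>
     (\<Sum>i\<in>{1..N}. x i i) \<le> int N - 2 \<and>
     (\<forall>b\<in>{1..B}. \<forall>c\<in>{1..C}. (\<Sum>i\<in>cand c. \<Sum>j\<in>beta b. x i j) \<le> int (v c)) \<and>
     (\<forall>i\<in>{1..N}. \<forall>j\<in>{1..N}.
        card {b\<in>{1..B}. i \<in> beta b} \<noteq> card {b\<in>{1..B}. j \<in> beta b} \<longrightarrow> x i j = 0)"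

definition objective :: "nat \<Rightarrow> (nat \<Rightarrow> nat \<Rightarrow> int) \<Rightarrow> int" where
  "objective N x = (\<Sum>i\<in>{1..N}. \<Sum>j\<in>{1..N} - {i}. x i j)"

definition optimal :: "nat \<Rightarrow> nat \<Rightarrow> (nat \<Rightarrow> nat set) \<Rightarrow> (nat \<Rightarrow> nat) \<Rightarrow> nat \<Rightarrow> (nat \<Rightarrow> nat set)
    \<Rightarrow> (nat \<Rightarrow> nat \<Rightarrow> int) \<Rightarrow> bool" where
  "optimal N C cand v B beta x \<longleftrightarrow> feasible N C cand v B beta x \<and>
     (\<forall>y. feasible N C cand v B beta y \<longrightarrow> objective N x \<le> objective N y)"

end

theory Submission
  imports Defs
begin

definition pm :: "(nat \<Rightarrow> nat) \<Rightarrow> nat \<Rightarrow> nat \<Rightarrow> int" where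
  "pm f i j = (if f i = j then 1 else 0)"

lemma sum_pm_row:
  assumes "finite A"
  shows "(\<Sum>j\<in>A. pm f i j) = (if f i \<in> A then 1 else 0)"
  unfolding pm_def using sum.delta'[OF assms, of "f i" "\<lambda>_. (1::int)"] by simp

lemma sum_ind_card:
  assumes "finite A"
  shows "(\<Sum>i\<in>A. (if P i then 1 else 0::int)) = int (card {i\<in>A. P i})"
proof -
  have "(\<Sum>i\<in>A. (if P i then 1 else 0::int)) = (\<Sum>i\<in>A. of_bool (P i))"
    by (simp add: of_bool_def)
  also have "\<dots> = of_nat (card (A \<inter> {i. P i}))" by (rule sum_of_bool_eq[OF assms assms])
  also have "A \<inter> {i. P i} = {i\<in>A. P i}" by auto
  finally show ?thesis by simp
qed

lemma objective_cong:
  assumes "\<forall>i\<in>{1..N}. \<forall>j\<in>{1..N}. x i j = y i j"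
  shows "objective N x = objective N y"
  unfolding objective_def using assms by (intro sum.cong) auto

lemma objective_pm:
  assumes "\<forall>i\<in>{1..N}. f i \<in> {1..N}"
  shows "objective N (pm f) = int (card {i\<in>{1..N}. f i \<noteq> i})"
proof -
  have "objective N (pm f) = (\<Sum>i\<in>{1..N}. (if f i \<noteq> i then 1 else 0::int))"
    unfolding objective_def
  proof (rule sum.cong)
    fix i assume "i \<in> {1..N}"
    then show "(\<Sum>j\<in>{1..N} - {i}. pm f i j) = (if f i \<noteq> i then 1 else 0)"
      using sum_pm_row[of "{1..N} - {i}" f i] assms by auto
  qed simp
  also have "\<dots> = int (card {i\<in>{1..N}. f i \<noteq> i})" by (rule sum_ind_card) simp
  finally show ?thesis .
qed

lemma matrix_perm:
  assumes x01: "\<forall>i\<in>{1..N}. \<forall>j\<in>{1..N}. x i j \<in> {0, 1}"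
    and row: "\<forall>i\<in>{1..N}. (\<Sum>j\<in>{1..N}. x i j) = (1::int)"
    and col: "\<forall>j\<in>{1..N}. (\<Sum>i\<in>{1..N}. x i j) = 1"
    and sd: "\<forall>i\<in>{1..N}. \<forall>j\<in>{1..N}. \<sigma> i = j \<longleftrightarrow> x i j = 1"
  shows "bij_betw \<sigma> {1..N} {1..N}" and "\<forall>i\<in>{1..N}. \<forall>j\<in>{1..N}. x i j = pm \<sigma> i j"
proof -
  have maps: "\<forall>i\<in>{1..N}. \<sigma> i \<in> {1..N}"
  proof
    fix i assume i: "i \<in> {1..N}"
    show "\<sigma> i \<in> {1..N}"
    proof (rule ccontr)
      assume "\<sigma> i \<notin> {1..N}"
      then have "\<forall>j\<in>{1..N}. x i j \<noteq> 1"
      proof (intro ballI notI)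
        fix j assume a1: "\<sigma> i \<notin> {1..N}" and a2: "j \<in> {1..N}" and a3: "x i j = 1"
        have "(\<sigma> i = j) = (x i j = 1)" using sd i a2 by blast
        then have "\<sigma> i = j" using a3 by simp
        then show False using a1 a2 by simp
      qed
      then have "\<forall>j\<in>{1..N}. x i j = 0" using x01 i by blast
      then have "(\<Sum>j\<in>{1..N}. x i j) = 0" by simp
      with row i show False by simp
    qed
  qed
  show xeq: "\<forall>i\<in>{1..N}. \<forall>j\<in>{1..N}. x i j = pm \<sigma> i j"
  proof (intro ballI)
    fix i j assume i: "i \<in> {1..N}" and j: "j \<in> {1..N}"
    show "x i j = pm \<sigma> i j"
    proof (cases "\<sigma> i = j")
      case True then show ?thesis using sd i j unfolding pm_def by simp
    next
      case False
      then have "x i j \<noteq> 1" using sd i j by blast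
      then have "x i j = 0" using x01 i j by blast
      then show ?thesis using False unfolding pm_def by simp
    qed
  qed
  have inj: "inj_on \<sigma> {1..N}"
  proof (rule inj_onI, rule ccontr)
    fix i i' assume i: "i \<in> {1..N}" and i': "i' \<in> {1..N}" and eq: "\<sigma> i = \<sigma> i'" and ne: "i \<noteq> i'"
    define j where "j = \<sigma> i"
    have j: "j \<in> {1..N}" using maps i j_def by auto
    have "(\<Sum>k\<in>{1..N}. x k j) = (\<Sum>k\<in>{1..N}. (if \<sigma> k = j then 1 else 0::int))"
      using xeq j unfolding pm_def by (intro sum.cong) auto
    also have "\<dots> = int (card {k\<in>{1..N}. \<sigma> k = j})" by (rule sum_ind_card) simp
    finally have s: "(\<Sum>k\<in>{1..N}. x k j) = int (card {k\<in>{1..N}. \<sigma> k = j})" .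
    have "{i, i'} \<subseteq> {k\<in>{1..N}. \<sigma> k = j}" using i i' eq j_def by auto
    then have "card {i, i'} \<le> card {k\<in>{1..N}. \<sigma> k = j}" by (intro card_mono) auto
    then have "2 \<le> card {k\<in>{1..N}. \<sigma> k = j}" using ne by simp
    with s col j show False by auto
  qed
  have "\<sigma> ` {1..N} \<subseteq> {1..N}" using maps by auto
  then have "\<sigma> ` {1..N} = {1..N}" using endo_inj_surj[OF _ _ inj] by simp
  then show "bij_betw \<sigma> {1..N} {1..N}" using inj by (simp add: bij_betw_def)
qed

lemma feasible_pm:
  assumes bij: "bij_betw f {1..N} {1..N}"
    and candsub: "\<forall>c\<in>{1..C}. cand c \<subseteq> {1..N}"
    and betasub: "\<forall>b\<in>{1..B}. beta b \<subseteq> {1..N}"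
    and nf: "card {i\<in>{1..N}. f i \<noteq> i} \<ge> 2"
    and c4: "\<forall>b\<in>{1..B}. \<forall>c\<in>{1..C}. card {i\<in>cand c. f i \<in> beta b} \<le> v c"
    and c5: "\<forall>i\<in>{1..N}. f i \<noteq> i \<longrightarrow> card {b\<in>{1..B}. i \<in> beta b} = card {b\<in>{1..B}. f i \<in> beta b}"
  shows "feasible N C cand v B beta (pm f)"
proof -
  have maps: "\<forall>i\<in>{1..N}. f i \<in> {1..N}" using bij bij_betwE by blast
  have inj: "inj_on f {1..N}" using bij bij_betw_def by blast
  have r1: "\<forall>i\<in>{1..N}. \<forall>j\<in>{1..N}. pm f i j \<in> {0, 1}" by (simp add: pm_def)
  have r2: "\<forall>i\<in>{1..N}. (\<Sum>j\<in>{1..N}. pm f i j) = 1"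
  proof
    fix i assume i: "i \<in> {1..N}"
    have "f i \<in> {1..N}" using maps i by blast
    then show "(\<Sum>j\<in>{1..N}. pm f i j) = 1" using sum_pm_row[of "{1..N}" f i] by simp
  qed
  have r3: "\<forall>j\<in>{1..N}. (\<Sum>i\<in>{1..N}. pm f i j) = 1"
  proof
    fix j assume j: "j \<in> {1..N}"
    have "f ` {1..N} = {1..N}" using bij by (simp add: bij_betw_def)
    then have "j \<in> f ` {1..N}" using j by simp
    then obtain i0 where i0: "i0 \<in> {1..N}" "f i0 = j" by blast
    have "{i\<in>{1..N}. f i = j} = {i0}"
    proof
      show "{i0} \<subseteq> {i\<in>{1..N}. f i = j}" using i0 by simp
      show "{i\<in>{1..N}. f i = j} \<subseteq> {i0}"
      proof
        fix i assume "i \<in> {i\<in>{1..N}. f i = j}"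
        then have "i \<in> {1..N}" "f i = f i0" using i0 by simp_all
        then have "i = i0" using inj_onD[OF inj _ _ i0(1)] by blast
        then show "i \<in> {i0}" by simp
      qed
    qed
    moreover have "(\<Sum>i\<in>{1..N}. pm f i j) = int (card {i\<in>{1..N}. f i = j})"
      unfolding pm_def by (rule sum_ind_card) simp
    ultimately show "(\<Sum>i\<in>{1..N}. pm f i j) = 1" by simp
  qed
  have r4: "(\<Sum>i\<in>{1..N}. pm f i i) \<le> int N - 2"
  proof -
    have "(\<Sum>i\<in>{1..N}. pm f i i) = int (card {i\<in>{1..N}. f i = i})"
      unfolding pm_def by (rule sum_ind_card) simp
    moreover have "card {i\<in>{1..N}. f i = i} + card {i\<in>{1..N}. f i \<noteq> i} = N"
    proof -
      have "card {i\<in>{1..N}. f i = i} + card {i\<in>{1..N}. f i \<noteq> i}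
          = card ({i\<in>{1..N}. f i = i} \<union> {i\<in>{1..N}. f i \<noteq> i})"
        by (rule card_Un_disjoint[symmetric]) auto
      also have "{i\<in>{1..N}. f i = i} \<union> {i\<in>{1..N}. f i \<noteq> i} = {1..N}" by auto
      finally show ?thesis by simp
    qed
    ultimately show ?thesis using nf by linarith
  qed
  have r5: "\<forall>b\<in>{1..B}. \<forall>c\<in>{1..C}. (\<Sum>i\<in>cand c. \<Sum>j\<in>beta b. pm f i j) \<le> int (v c)"
  proof (intro ballI)
    fix b c assume b: "b \<in> {1..B}" and c: "c \<in> {1..C}"
    have fb: "finite (beta b)" using betasub b by (meson finite_atLeastAtMost finite_subset)
    have fc: "finite (cand c)" using candsub c by (meson finite_atLeastAtMost finite_subset)
    have "(\<Sum>i\<in>cand c. \<Sum>j\<in>beta b. pm f i j) = (\<Sum>i\<in>cand c. (if f i \<in> beta b then 1 else 0))"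
      using sum_pm_row[OF fb] by simp
    also have "\<dots> = int (card {i\<in>cand c. f i \<in> beta b})" by (rule sum_ind_card[OF fc])
    finally have eq: "(\<Sum>i\<in>cand c. \<Sum>j\<in>beta b. pm f i j) = int (card {i\<in>cand c. f i \<in> beta b})" .
    have "card {i\<in>cand c. f i \<in> beta b} \<le> v c" using c4 b c by blast
    then show "(\<Sum>i\<in>cand c. \<Sum>j\<in>beta b. pm f i j) \<le> int (v c)" using eq by simp
  qed
  have r6: "\<forall>i\<in>{1..N}. \<forall>j\<in>{1..N}.
        card {b\<in>{1..B}. i \<in> beta b} \<noteq> card {b\<in>{1..B}. j \<in> beta b} \<longrightarrow> pm f i j = 0"
    using c5 unfolding pm_def by auto
  show ?thesis unfolding feasible_def by (intro conjI r1 r2 r3 r4 r5 r6)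
qed

theorem theorem3:
  fixes N C B :: nat and cand :: "nat \<Rightarrow> nat set" and v :: "nat \<Rightarrow> nat"
    and beta :: "nat \<Rightarrow> nat set" and x :: "nat \<Rightarrow> nat \<Rightarrow> int" and \<sigma> :: "nat \<Rightarrow> nat"
  assumes style: "is_ballot_style N C cand v"
    and deck: "\<forall>b\<in>{1..B}. beta b \<in> valid_ballots N C cand v"
    and opt: "optimal N C cand v B beta x"
    and sigma_def: "\<forall>i\<in>{1..N}. \<forall>j\<in>{1..N}. \<sigma> i = j \<longleftrightarrow> x i j = 1"
  shows "\<sigma> \<in> Sigma_set N
    \<and> (\<forall>c\<in>{1..C}. \<forall>i\<in>cand c. Tsigma \<sigma> cand v B beta c i = Tstar cand v B beta c i)
    \<and> one_component (graph_V \<sigma> C cand) (graph_E \<sigma> C cand)"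
proof -
  have feas: "feasible N C cand v B beta x" and minx: "\<forall>y. feasible N C cand v B beta y \<longrightarrow> objective N x \<le> objective N y"
    using opt unfolding optimal_def by auto
  have x01: "\<forall>i\<in>{1..N}. \<forall>j\<in>{1..N}. x i j \<in> {0, 1}"
    and row: "\<forall>i\<in>{1..N}. (\<Sum>j\<in>{1..N}. x i j) = 1"
    and col: "\<forall>j\<in>{1..N}. (\<Sum>i\<in>{1..N}. x i j) = 1"
    and diag: "(\<Sum>i\<in>{1..N}. x i i) \<le> int N - 2"
    and c4: "\<forall>b\<in>{1..B}. \<forall>c\<in>{1..C}. (\<Sum>i\<in>cand c. \<Sum>j\<in>beta b. x i j) \<le> int (v c)"
    and c5: "\<forall>i\<in>{1..N}. \<forall>j\<in>{1..N}.
        card {b\<in>{1..B}. i \<in> beta b} \<noteq> card {b\<in>{1..B}. j \<in> beta b} \<longrightarrow> x i j = 0"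
    using feas unfolding feasible_def by auto
  have candsub: "\<forall>c\<in>{1..C}. cand c \<subseteq> {1..N}"
    and disj: "\<forall>c\<in>{1..C}. \<forall>c'\<in>{1..C}. c \<noteq> c' \<longrightarrow> cand c \<inter> cand c' = {}"
    and cover: "\<forall>i\<in>{1..N}. \<exists>c\<in>{1..C}. i \<in> cand c"
    using style unfolding is_ballot_style_def by auto
  have betasub: "\<forall>b\<in>{1..B}. beta b \<subseteq> {1..N}"
    and bvalid: "\<forall>b\<in>{1..B}. \<forall>c\<in>{1..C}. card (cand c \<inter> beta b) \<le> v c"
    using deck unfolding valid_ballots_def by auto
  have bij: "bij_betw \<sigma> {1..N} {1..N}" and xeq: "\<forall>i\<in>{1..N}. \<forall>j\<in>{1..N}. x i j = pm \<sigma> i j"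
    using matrix_perm[OF x01 row col sigma_def] by auto
  have maps: "\<forall>i\<in>{1..N}. \<sigma> i \<in> {1..N}" using bij bij_betwE by blast
  have inj: "inj_on \<sigma> {1..N}" using bij bij_betw_def by blast
  have objx: "objective N x = int (card {i\<in>{1..N}. \<sigma> i \<noteq> i})"
    using objective_cong[OF xeq] objective_pm[OF maps] by simp
  have c4s: "\<forall>b\<in>{1..B}. \<forall>c\<in>{1..C}. card {j\<in>cand c. \<sigma> j \<in> beta b} \<le> v c"
  proof (intro ballI)
    fix b c assume b: "b \<in> {1..B}" and c: "c \<in> {1..C}"
    have fb: "finite (beta b)" using betasub b by (meson finite_atLeastAtMost finite_subset)
    have fc: "finite (cand c)" using candsub c by (meson finite_atLeastAtMost finite_subset)
    have "(\<Sum>i\<in>cand c. \<Sum>j\<in>beta b. x i j) = (\<Sum>i\<in>cand c. \<Sum>j\<in>beta b. pm \<sigma> i j)"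
    proof (intro sum.cong refl)
      fix i j assume "i \<in> cand c" "j \<in> beta b"
      then have "i \<in> {1..N}" "j \<in> {1..N}" using candsub betasub b c by blast+
      then show "x i j = pm \<sigma> i j" using xeq by blast
    qed
    also have "\<dots> = (\<Sum>i\<in>cand c. (if \<sigma> i \<in> beta b then 1 else 0))"
      using sum_pm_row[OF fb] by simp
    also have "\<dots> = int (card {i\<in>cand c. \<sigma> i \<in> beta b})" by (rule sum_ind_card[OF fc])
    finally have eq: "(\<Sum>i\<in>cand c. \<Sum>j\<in>beta b. x i j) = int (card {i\<in>cand c. \<sigma> i \<in> beta b})" .
    have "(\<Sum>i\<in>cand c. \<Sum>j\<in>beta b. x i j) \<le> int (v c)" using c4 b c by blast
    then show "card {j\<in>cand c. \<sigma> j \<in> beta b} \<le> v c" using eq by simp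
  qed
  have c5s: "\<forall>i\<in>{1..N}. card {b\<in>{1..B}. i \<in> beta b} = card {b\<in>{1..B}. \<sigma> i \<in> beta b}"
  proof
    fix i assume i: "i \<in> {1..N}"
    have "x i (\<sigma> i) = 1" using sigma_def i maps by blast
    moreover have "\<sigma> i \<in> {1..N}" using maps i by blast
    then have "card {b\<in>{1..B}. i \<in> beta b} \<noteq> card {b\<in>{1..B}. \<sigma> i \<in> beta b} \<longrightarrow> x i (\<sigma> i) = 0"
      using c5 i by blast
    ultimately show "card {b\<in>{1..B}. i \<in> beta b} = card {b\<in>{1..B}. \<sigma> i \<in> beta b}"
      by auto
  qed
  have nonid: "\<exists>i\<in>{1..N}. \<sigma> i \<noteq> i"
  proof (rule ccontr)
    assume "\<not> ?thesis"
    then have "\<forall>i\<in>{1..N}. x i i = 1" using sigma_def by blast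
    then have "(\<Sum>i\<in>{1..N}. x i i) = int N" by simp
    with diag show False by simp
  qed
  have part1: "\<sigma> \<in> Sigma_set N" unfolding Sigma_set_def using bij nonid by blast
  have part2: "\<forall>c\<in>{1..C}. \<forall>i\<in>cand c. Tsigma \<sigma> cand v B beta c i = Tstar cand v B beta c i"
  proof (intro ballI)
    fix c i assume c: "c \<in> {1..C}" and i: "i \<in> cand c"
    have iN: "i \<in> {1..N}" using candsub c i by blast
    have s1: "{b\<in>{1..B}. \<sigma> i \<in> beta b \<and> card {\<sigma> j |j. j \<in> cand c \<and> \<sigma> j \<in> beta b} \<le> v c}
        = {b\<in>{1..B}. \<sigma> i \<in> beta b}"
    proof -
      have "\<forall>b\<in>{1..B}. card {\<sigma> j |j. j \<in> cand c \<and> \<sigma> j \<in> beta b} \<le> v c"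
      proof
        fix b assume b: "b \<in> {1..B}"
        have "{\<sigma> j |j. j \<in> cand c \<and> \<sigma> j \<in> beta b} = \<sigma> ` {j\<in>cand c. \<sigma> j \<in> beta b}" by auto
        moreover have "inj_on \<sigma> {j\<in>cand c. \<sigma> j \<in> beta b}"
          by (rule inj_on_subset[OF inj]) (use candsub c in blast)
        ultimately have "card {\<sigma> j |j. j \<in> cand c \<and> \<sigma> j \<in> beta b} = card {j\<in>cand c. \<sigma> j \<in> beta b}"
          by (simp add: card_image)
        then show "card {\<sigma> j |j. j \<in> cand c \<and> \<sigma> j \<in> beta b} \<le> v c" using c4s b c by simp
      qed
      then show ?thesis by auto
    qed
    have s2: "{b\<in>{1..B}. i \<in> beta b \<and> card (cand c \<inter> beta b) \<le> v c} = {b\<in>{1..B}. i \<in> beta b}"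
      using bvalid c by auto
    show "Tsigma \<sigma> cand v B beta c i = Tstar cand v B beta c i"
      unfolding Tsigma_def Tstar_def s1 s2 using c5s iN by simp
  qed
  define V where "V = graph_V \<sigma> C cand"
  define E where "E = graph_E \<sigma> C cand"
  define R where "R = Restr (E \<union> E\<inverse>) V"
  have VC: "V \<subseteq> {1..C}" unfolding V_def graph_V_def by auto
  have part3: "one_component V E"
    unfolding one_component_def R_def[symmetric]
  proof (intro conjI)
    obtain i where i: "i \<in> {1..N}" "\<sigma> i \<noteq> i" using nonid by blast
    then obtain c where "c \<in> {1..C}" "i \<in> cand c" using cover by blast
    then have "c \<in> V" unfolding V_def graph_V_def using i by blast
    then show "V \<noteq> {}" by blast
  next
    show "\<forall>a\<in>V. \<forall>b\<in>V. (a, b) \<in> R\<^sup>*"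
    proof (rule ccontr)
      assume "\<not> ?thesis"
      then obtain a b where a: "a \<in> V" and b: "b \<in> V" and nab: "(a, b) \<notin> R\<^sup>*" by blast
      define K where "K = {c\<in>V. (a, c) \<in> R\<^sup>*}"
      define S where "S = (\<Union>c\<in>K. cand c)"
      define f where "f = (\<lambda>i. if i \<in> S then \<sigma> i else i)"
      have KV: "K \<subseteq> V" unfolding K_def by auto
      have SN: "S \<subseteq> {1..N}" unfolding S_def using KV VC candsub by blast
      have aK: "a \<in> K" unfolding K_def using a by simp
      have bK: "b \<notin> K" unfolding K_def using nab by simp
      have Sin: "\<And>c i. c \<in> {1..C} \<Longrightarrow> i \<in> cand c \<Longrightarrow> i \<in> S \<Longrightarrow> c \<in> K"
      proof -
        fix c i assume c: "c \<in> {1..C}" and ic: "i \<in> cand c" and iS: "i \<in> S"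
        then obtain c' where c': "c' \<in> K" "i \<in> cand c'" unfolding S_def by blast
        then have "c' \<in> {1..C}" using KV VC by blast
        then have "c = c'" using disj c ic c' by blast
        then show "c \<in> K" using c' by simp
      qed
      have sigS: "\<forall>i\<in>S. \<sigma> i \<in> S"
      proof
        fix i assume iS: "i \<in> S"
        then obtain c where cK: "c \<in> K" and ic: "i \<in> cand c" unfolding S_def by blast
        show "\<sigma> i \<in> S"
        proof (cases "\<sigma> i = i")
          case True then show ?thesis using iS by simp
        next
          case False
          have iN: "i \<in> {1..N}" using iS SN by blast
          then have siN: "\<sigma> i \<in> {1..N}" using maps by blast
          then obtain c' where c': "c' \<in> {1..C}" "\<sigma> i \<in> cand c'" using cover by blast
          have cC: "c \<in> {1..C}" using cK KV VC by blast
          have ssi: "\<sigma> (\<sigma> i) \<noteq> \<sigma> i" using inj_onD[OF inj _ siN iN] False by blast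
          have c'V: "c' \<in> V" unfolding V_def graph_V_def using c' ssi by blast
          have cV: "c \<in> V" using cK KV by blast
          have "(c, c') \<in> E" unfolding E_def graph_E_def using cC c' ic by blast
          then have "(c, c') \<in> R" unfolding R_def using cV c'V by blast
          moreover have "(a, c) \<in> R\<^sup>*" using cK unfolding K_def by simp
          ultimately have "(a, c') \<in> R\<^sup>*" by (meson rtrancl_into_rtrancl)
          then have "c' \<in> K" unfolding K_def using c'V by simp
          then show ?thesis unfolding S_def using c' by blast
        qed
      qed
      have fmaps: "f ` {1..N} \<subseteq> {1..N}"
      proof
        fix y assume "y \<in> f ` {1..N}"
        then obtain i where i: "i \<in> {1..N}" and y: "y = f i" by blast
        show "y \<in> {1..N}"
        proof (cases "i \<in> S")
          case True then show ?thesis using y i maps unfolding f_def by simp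
        next
          case False then show ?thesis using y i unfolding f_def by simp
        qed
      qed
      have finj: "inj_on f {1..N}"
      proof (rule inj_onI)
        fix i i' assume i: "i \<in> {1..N}" and i': "i' \<in> {1..N}" and eq: "f i = f i'"
        show "i = i'"
        proof (cases "i \<in> S"; cases "i' \<in> S")
          assume a1: "i \<in> S" "i' \<in> S"
          then have "\<sigma> i = \<sigma> i'" using eq unfolding f_def by simp
          then show ?thesis using inj_onD[OF inj _ i i'] by blast
        next
          assume a1: "i \<in> S" "i' \<notin> S"
          then have "\<sigma> i = i'" using eq unfolding f_def by simp
          then show ?thesis using a1 sigS by blast
        next
          assume a1: "i \<notin> S" "i' \<in> S"
          then have "i = \<sigma> i'" using eq unfolding f_def by simp
          then show ?thesis using a1 sigS by blast
        next
          assume "i \<notin> S" "i' \<notin> S" then show ?thesis using eq unfolding f_def by simp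
        qed
      qed
      have fbij: "bij_betw f {1..N} {1..N}"
        using endo_inj_surj[OF _ fmaps finj] finj by (simp add: bij_betw_def)
      have nff: "{i\<in>{1..N}. f i \<noteq> i} = {i\<in>S. \<sigma> i \<noteq> i}" unfolding f_def using SN by auto
      have nf2: "card {i\<in>{1..N}. f i \<noteq> i} \<ge> 2"
      proof -
        obtain i where ia: "i \<in> cand a" and si: "\<sigma> i \<noteq> i"
          using a unfolding V_def graph_V_def by blast
        have iS: "i \<in> S" unfolding S_def using aK ia by blast
        have iN: "i \<in> {1..N}" using iS SN by blast
        have siS: "\<sigma> i \<in> S" using sigS iS by blast
        have siN: "\<sigma> i \<in> {1..N}" using maps iN by blast
        have ssi: "\<sigma> (\<sigma> i) \<noteq> \<sigma> i" using inj_onD[OF inj _ siN iN] si by blast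
        have sub: "{i, \<sigma> i} \<subseteq> {i\<in>S. \<sigma> i \<noteq> i}" using iS siS si ssi by blast
        have sub2: "{i\<in>S. \<sigma> i \<noteq> i} \<subseteq> {1..N}" using SN by blast
        have fin: "finite {i\<in>S. \<sigma> i \<noteq> i}" using finite_subset[OF sub2] by simp
        have "card {i, \<sigma> i} \<le> card {i\<in>S. \<sigma> i \<noteq> i}" using card_mono[OF fin sub] .
        moreover have "card {i, \<sigma> i} = 2" using si by simp
        ultimately show ?thesis using nff by simp
      qed
      have fc4: "\<forall>b\<in>{1..B}. \<forall>c\<in>{1..C}. card {i\<in>cand c. f i \<in> beta b} \<le> v c"
      proof (intro ballI)
        fix b c assume b: "b \<in> {1..B}" and c: "c \<in> {1..C}"
        show "card {i\<in>cand c. f i \<in> beta b} \<le> v c"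
        proof (cases "c \<in> K")
          case True
          then have "cand c \<subseteq> S" unfolding S_def by blast
          then have "{i\<in>cand c. f i \<in> beta b} = {i\<in>cand c. \<sigma> i \<in> beta b}" unfolding f_def by auto
          then show ?thesis using c4s b c by simp
        next
          case False
          then have "cand c \<inter> S = {}" using Sin c by blast
          then have "{i\<in>cand c. f i \<in> beta b} = cand c \<inter> beta b" unfolding f_def by auto
          then show ?thesis using bvalid b c by simp
        qed
      qed
      have fc5: "\<forall>i\<in>{1..N}. f i \<noteq> i \<longrightarrow> card {b\<in>{1..B}. i \<in> beta b} = card {b\<in>{1..B}. f i \<in> beta b}"
        using c5s unfolding f_def by auto
      have feasy: "feasible N C cand v B beta (pm f)"
        by (rule feasible_pm[OF fbij candsub betasub nf2 fc4 fc5])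
      have fmaps': "\<forall>i\<in>{1..N}. f i \<in> {1..N}" using fmaps by blast
      have objy: "objective N (pm f) = int (card {i\<in>S. \<sigma> i \<noteq> i})"
        using objective_pm[OF fmaps'] nff by simp
      have psub: "{i\<in>S. \<sigma> i \<noteq> i} \<subset> {i\<in>{1..N}. \<sigma> i \<noteq> i}"
      proof -
        obtain i where ib: "i \<in> cand b" and si: "\<sigma> i \<noteq> i"
          using b unfolding V_def graph_V_def by blast
        have bC: "b \<in> {1..C}" using b VC by blast
        have "i \<notin> S" using Sin[OF bC ib] bK by blast
        moreover have "i \<in> {1..N}" using candsub bC ib by blast
        ultimately have iin: "i \<in> {i\<in>{1..N}. \<sigma> i \<noteq> i}" "i \<notin> {i\<in>S. \<sigma> i \<noteq> i}" using si by simp_all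
        have "{i\<in>S. \<sigma> i \<noteq> i} \<subseteq> {i\<in>{1..N}. \<sigma> i \<noteq> i}" using SN by blast
        then show ?thesis using iin by (metis psubsetI)
      qed
      have "card {i\<in>S. \<sigma> i \<noteq> i} < card {i\<in>{1..N}. \<sigma> i \<noteq> i}"
        by (rule psubset_card_mono[OF _ psub]) (rule finite_subset[of _ "{1..N}"], blast, simp)
      then have "objective N (pm f) < objective N x" using objx objy by simp
      moreover have "objective N x \<le> objective N (pm f)" using minx feasy by blast
      ultimately show False by simp
    qed
  qed
  have part3': "one_component (graph_V \<sigma> C cand) (graph_E \<sigma> C cand)" using part3 unfolding V_def E_def .
  show ?thesis using part1 part2 part3' by (intro conjI)
qed

end
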